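(* Let $k\ge 2$, let $\mathbf V_1,\ldots,\mathbf V_k$ and $\mathbf Q$ be $p\times p$ positive definite matrices, $\mathbf A=(\sum_{i=1}^k\mathbf V_i^{-1})^{-1}$, and $d_1,\ldots,d_k$ real constants. For $\mathbf x_1,\ldots,\mathbf x_k\in\mathbb R^p$, not all equal, let $\hat{\boldsymbol\nu}=\mathbf A\sum_{i=1}^k\mathbf V_i^{-1}\mathbf x_i$ and $$B(\mathbf x_1,\ldots,\mathbf x_k)=\frac{\{\sum_{i=1}^k d_i(\mathbf x_i-\hat{\boldsymbol\nu})\}^\top\mathbf Q\{\sum_{i=1}^k d_i(\mathbf x_i-\hat{\boldsymbol\nu})\}}{\sum_{j=1}^k(\mathbf x_j-\hat{\boldsymbol\nu})^\top\mathbf V_j^{-1}(\mathbf x_j-\hat{\boldsymbol\nu})}.$$ Then $$B(\mathbf x_1,\ldots,\mathbf x_k)\le \mathrm{Ch}_{\max}\Big(\Big(\sum_{i=1}^k d_i^2\mathbf V_i-\Big(\sum_{i=1}^k d_i\Big)^2\mathbf A\Big)\mathbf Q\Big).$$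
   Context: $\mathrm{Ch}_{\max}(\mathbf C)$ denotes the maximum characteristic value (eigenvalue) of the matrix $\mathbf C$. *)

theory Defs
  imports "HOL-Analysis.Analysis"
begin

definition pos_def_mat :: "real^'p^'p \<Rightarrow> bool" where
  "pos_def_mat M \<longleftrightarrow> transpose M = M \<and> (\<forall>x. x \<noteq> 0 \<longrightarrow> x \<bullet> (M *v x) > 0)"

definition real_eigenvalues :: "real^'p^'p \<Rightarrow> real set" where
  "real_eigenvalues M = {l. \<exists>v. v \<noteq> 0 \<and> M *v v = l *\<^sub>R v}"

definition Ch_max :: "real^'p^'p \<Rightarrow> real" where
  "Ch_max M = Max (real_eigenvalues M)"

end

theory Submission
  imports Defs
begin


lemma inv_props:
  fixes A :: "real^'p^'p"
  assumes "invertible A"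
  shows "A ** matrix_inv A = mat 1" "matrix_inv A ** A = mat 1"
proof -
  have "A ** matrix_inv A = mat 1 \<and> matrix_inv A ** A = mat 1"
    using assms unfolding invertible_def matrix_inv_def by (rule someI_ex)
  then show "A ** matrix_inv A = mat 1" "matrix_inv A ** A = mat 1" by auto
qed

lemma sym_dot:
  fixes M :: "real^'p^'p"
  assumes "transpose M = M"
  shows "x \<bullet> (M *v y) = y \<bullet> (M *v x)"
proof -
  have "x \<bullet> (M *v y) = (x v* M) \<bullet> y" by (simp add: dot_lmul_matrix)
  also have "x v* M = transpose M *v x" by simp
  also have "\<dots> = M *v x" using assms by simp
  finally show ?thesis by (simp add: inner_commute)
qed

lemma pd_inj:
  fixes M :: "real^'p^'p"
  assumes "pos_def_mat M" "M *v x = 0" shows "x = 0"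
  using assms unfolding pos_def_mat_def by force

lemma pd_invertible:
  fixes M :: "real^'p^'p"
  assumes "pos_def_mat M" shows "invertible M"
  using assms pd_inj invertible_left_inverse matrix_left_invertible_ker by metis

lemma pd_inv:
  fixes M :: "real^'p^'p"
  assumes "pos_def_mat M" shows "pos_def_mat (matrix_inv M)"
proof -
  note I = inv_props[OF pd_invertible[OF assms]]
  have sM: "transpose M = M" using assms unfolding pos_def_mat_def by auto
  have "transpose (matrix_inv M) ** M = mat 1"
    using I(1) sM by (metis matrix_transpose_mul transpose_mat)
  then have "transpose (matrix_inv M) = matrix_inv M"
    using I(1) by (metis matrix_mul_assoc matrix_mul_lid matrix_mul_rid)
  moreover have "x \<bullet> (matrix_inv M *v x) > 0" if "x \<noteq> 0" for x
  proof -
    define y where "y = matrix_inv M *v x"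
    have My: "M *v y = x" unfolding y_def using I(1) by (simp add: matrix_vector_mul_assoc)
    then have "y \<noteq> 0" using that by auto
    then have "y \<bullet> (M *v y) > 0" using assms unfolding pos_def_mat_def by auto
    then show ?thesis using My by (simp add: y_def inner_commute)
  qed
  ultimately show ?thesis unfolding pos_def_mat_def by auto
qed

lemma sum_mv:
  fixes f :: "'i \<Rightarrow> real^'p^'p"
  shows "(sum f S) *v x = (\<Sum>i\<in>S. f i *v x)"
  by (induction S rule: infinite_finite_induct) (auto simp: matrix_vector_mult_add_rdistrib)

lemma transpose_sum:
  fixes f :: "'i \<Rightarrow> real^'p^'p"
  shows "transpose (sum f S) = (\<Sum>i\<in>S. transpose (f i))"
  by (simp add: transpose_def vec_eq_iff)

lemma pd_sum:
  fixes f :: "'i \<Rightarrow> real^'p^'p"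
  assumes "finite S" "S \<noteq> {}" "\<forall>i\<in>S. pos_def_mat (f i)"
  shows "pos_def_mat (sum f S)"
proof -
  have "transpose (sum f S) = sum f S"
    using assms(3) by (simp add: transpose_sum pos_def_mat_def)
  moreover have "x \<bullet> (sum f S *v x) > 0" if "x \<noteq> 0" for x
    unfolding sum_mv inner_sum_right
    using assms that by (intro sum_pos) (auto simp: pos_def_mat_def)
  ultimately show ?thesis unfolding pos_def_mat_def by auto
qed




lemma quad_form_scale:
  fixes M :: "real^'p^'p"
  shows "(c *\<^sub>R w) \<bullet> (M *v (c *\<^sub>R w)) = c^2 * (w \<bullet> (M *v w))"
  by (simp add: matrix_vector_mult_scaleR power2_eq_square)

lemma quad_form_add:
  fixes M :: "real^'p^'p"
  assumes "transpose M = M"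
  shows "(v + t *\<^sub>R r) \<bullet> (M *v (v + t *\<^sub>R r)) =
     v \<bullet> (M *v v) + 2 * t * (r \<bullet> (M *v v)) + t^2 * (r \<bullet> (M *v r))"
proof -
  have "v \<bullet> (M *v r) = r \<bullet> (M *v v)" using sym_dot[OF assms] .
  then show ?thesis
    by (simp add: matrix_vector_right_distrib matrix_vector_mult_scaleR inner_add_left
        inner_add_right power2_eq_square algebra_simps)
qed

lemma quad_neg_lin:
  fixes a c :: real
  assumes "\<forall>t. 2 * t * a + t^2 * c \<le> 0" "a \<ge> 0"
  shows "a = 0"
proof (rule ccontr)
  assume "a \<noteq> 0" then have a: "a > 0" using assms(2) by auto
  define t where "t = a / (\<bar>c\<bar> + 1)"
  have t: "t > 0" using a by (simp add: t_def)
  have "t * \<bar>c\<bar> \<le> a" unfolding t_def using a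
    by (simp add: field_simps)
  then have h: "t * (t * \<bar>c\<bar>) \<le> t * a" using t by (simp add: mult_left_mono)
  have "t^2 * (- \<bar>c\<bar>) \<le> t^2 * c" by (intro mult_left_mono) auto
  then have "t^2 * c \<ge> - (t * (t * \<bar>c\<bar>))" by (simp add: power2_eq_square)
  moreover have "t * a > 0" using t a by simp
  ultimately have "2 * t * a + t^2 * c > 0" using h by linarith
  then show False using assms(1) by (smt (verit))
qed

lemma rayleigh:
  fixes M P :: "real^'p^'p"
  assumes sM: "transpose M = M" and pP: "pos_def_mat P"
  shows "\<exists>l w0. w0 \<noteq> 0 \<and> M *v w0 = l *\<^sub>R (P *v w0) \<and> (\<forall>w. w \<bullet> (M *v w) \<le> l * (w \<bullet> (P *v w)))"
proof -
  define f where "f v = (v \<bullet> (M *v v)) / (v \<bullet> (P *v v))" for v :: "real^'p"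
  have pos: "v \<bullet> (P *v v) > 0" if "v \<noteq> 0" for v using pP that unfolding pos_def_mat_def by auto
  have cont: "continuous_on (sphere 0 1) f"
    unfolding f_def
    apply (intro continuous_intros)
    using pos by (metis less_irrefl mem_sphere_0 norm_zero zero_neq_one)
  have ne: "sphere (0::real^'p) 1 \<noteq> {}"
    by (metis norm_axis_1 mem_sphere_0 empty_iff)
  obtain v0 where v0: "v0 \<in> sphere 0 1" "\<forall>y\<in>sphere 0 1. f y \<le> f v0"
    using continuous_attains_sup[OF compact_sphere ne cont] by blast
  define l where "l = f v0"
  have v0nz: "v0 \<noteq> 0" using v0(1) by auto
  have bound: "w \<bullet> (M *v w) \<le> l * (w \<bullet> (P *v w))" for w
  proof (cases "w = 0")
    case True then show ?thesis by simp
  next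
    case False
    define v where "v = (1 / norm w) *\<^sub>R w"
    have "v \<in> sphere 0 1" using False by (simp add: v_def)
    then have "f v \<le> l" using v0 l_def by auto
    moreover have "f v = f w" unfolding f_def v_def quad_form_scale using False by simp
    ultimately have "(w \<bullet> (M *v w)) / (w \<bullet> (P *v w)) \<le> l" by (simp add: f_def)
    then show ?thesis using pos[OF False] by (simp add: divide_le_eq)
  qed
  have lv0: "v0 \<bullet> (M *v v0) = l * (v0 \<bullet> (P *v v0))"
    using pos[OF v0nz] by (simp add: l_def f_def)
  have sP: "transpose P = P" using pP unfolding pos_def_mat_def by auto
  define r where "r = M *v v0 - l *\<^sub>R (P *v v0)"
  have "\<forall>t. 2 * t * (r \<bullet> r) + t^2 * (r \<bullet> (M *v r) - l * (r \<bullet> (P *v r))) \<le> 0"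
  proof
    fix t :: real
    have "(v0 + t *\<^sub>R r) \<bullet> (M *v (v0 + t *\<^sub>R r)) \<le> l * ((v0 + t *\<^sub>R r) \<bullet> (P *v (v0 + t *\<^sub>R r)))"
      by (rule bound)
    then have h: "v0 \<bullet> (M *v v0) + 2 * t * (r \<bullet> (M *v v0)) + t^2 * (r \<bullet> (M *v r))
       \<le> l * (v0 \<bullet> (P *v v0) + 2 * t * (r \<bullet> (P *v v0)) + t^2 * (r \<bullet> (P *v r)))"
      unfolding quad_form_add[OF sM] quad_form_add[OF sP] .
    have e: "r \<bullet> (M *v v0) = r \<bullet> r + l * (r \<bullet> (P *v v0))"
      unfolding r_def by (simp add: inner_diff_right)
    define a where "a = r \<bullet> r"
    define b where "b = r \<bullet> (P *v v0)"
    define c1 where "c1 = r \<bullet> (M *v r)"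
    define c2 where "c2 = r \<bullet> (P *v r)"
    define m0 where "m0 = v0 \<bullet> (P *v v0)"
    have h2: "l * m0 + 2 * t * (a + l * b) + t^2 * c1 \<le> l * (m0 + 2 * t * b + t^2 * c2)"
      using h unfolding e lv0 a_def b_def c1_def c2_def m0_def .
    have "2 * t * a + t^2 * (c1 - l * c2) \<le> 0"
      using h2 by (simp add: algebra_simps)
    then show "2 * t * (r \<bullet> r) + t^2 * (r \<bullet> (M *v r) - l * (r \<bullet> (P *v r))) \<le> 0"
      unfolding a_def c1_def c2_def .
  qed
  then have "r \<bullet> r = 0" by (intro quad_neg_lin) auto
  then have "M *v v0 = l *\<^sub>R (P *v v0)" unfolding r_def by simp
  then show ?thesis using v0nz bound by blast
qed




lemma chmax:
  fixes M Q :: "real^'p^'p"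
  assumes sM: "transpose M = M" and pQ: "pos_def_mat Q"
  shows "\<exists>l. Ch_max (M ** Q) = l \<and> (\<forall>w. w \<bullet> (M *v w) \<le> l * (w \<bullet> (matrix_inv Q *v w)))
          \<and> (\<exists>w0. w0 \<noteq> 0 \<and> w0 \<bullet> (M *v w0) = l * (w0 \<bullet> (matrix_inv Q *v w0)))"
proof -
  define P where "P = matrix_inv Q"
  have pP: "pos_def_mat P" unfolding P_def using pd_inv[OF pQ] .
  have sP: "transpose P = P" using pP unfolding pos_def_mat_def by auto
  note I = inv_props[OF pd_invertible[OF pQ]]
  have QP: "Q *v (P *v w) = w" for w unfolding P_def using I(1) by (simp add: matrix_vector_mul_assoc)
  have PQ: "P *v (Q *v w) = w" for w unfolding P_def using I(2) by (simp add: matrix_vector_mul_assoc)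
  have posP: "w \<bullet> (P *v w) > 0" if "w \<noteq> 0" for w using pP that unfolding pos_def_mat_def by auto
  obtain l w0 where w0: "w0 \<noteq> 0" "M *v w0 = l *\<^sub>R (P *v w0)"
    and bound: "\<forall>w. w \<bullet> (M *v w) \<le> l * (w \<bullet> (P *v w))"
    using rayleigh[OF sM pP] by blast
  define E where "E = real_eigenvalues (M ** Q)"
  have gen: "\<exists>w. w \<noteq> 0 \<and> M *v w = mu *\<^sub>R (P *v w)" if mE: "mu \<in> E" for mu
  proof -
    obtain z where z: "z \<noteq> 0" "(M ** Q) *v z = mu *\<^sub>R z"
      using mE unfolding E_def real_eigenvalues_def by auto
    have "Q *v z \<noteq> 0" using z(1) PQ[of z] by auto
    moreover have "M *v (Q *v z) = mu *\<^sub>R (P *v (Q *v z))"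
    proof -
      have "M *v (Q *v z) = (M ** Q) *v z" by (simp add: matrix_vector_mul_assoc)
      then show ?thesis using z(2) PQ[of z] by simp
    qed
    ultimately show ?thesis by blast
  qed
  have lE: "l \<in> E"
  proof -
    have "P *v w0 \<noteq> 0" using w0(1) QP[of w0] by auto
    moreover have "(M ** Q) *v (P *v w0) = l *\<^sub>R (P *v w0)"
      using w0(2) by (simp add: QP flip: matrix_vector_mul_assoc)
    ultimately show ?thesis unfolding E_def real_eigenvalues_def by blast
  qed
  have ub: "mu \<le> l" if mE: "mu \<in> E" for mu
  proof -
    obtain w where w: "w \<noteq> 0" "M *v w = mu *\<^sub>R (P *v w)" using gen[OF mE] by blast
    have "mu * (w \<bullet> (P *v w)) \<le> l * (w \<bullet> (P *v w))" proof -
      have "w \<bullet> (M *v w) = mu * (w \<bullet> (P *v w))" using w(2) by simp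
      then show ?thesis using bound by metis
    qed
    then show ?thesis using posP[OF w(1)] by simp
  qed
  have fin: "finite E"
  proof (rule ccontr)
    assume "\<not> finite E"
    then obtain B where B: "finite B" "card B = CARD('p) + 1" "B \<subseteq> E"
      using infinite_arbitrarily_large by blast
    define g where "g mu = (SOME w. w \<noteq> 0 \<and> M *v w = mu *\<^sub>R (P *v w))" for mu
    have g: "g mu \<noteq> 0 \<and> M *v g mu = mu *\<^sub>R (P *v g mu)" if "mu \<in> B" for mu
      using someI_ex[OF gen[OF subsetD[OF B(3) that]]] unfolding g_def .
    have orth: "g m1 \<bullet> (P *v g m2) = 0" if "m1 \<in> B" "m2 \<in> B" "m1 \<noteq> m2" for m1 m2
    proof -
      have "g m1 \<bullet> (M *v g m2) = g m2 \<bullet> (M *v g m1)" by (rule sym_dot[OF sM])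
      then have "m2 * (g m1 \<bullet> (P *v g m2)) = m1 * (g m2 \<bullet> (P *v g m1))"
        using g[OF that(1)] g[OF that(2)] by simp
      moreover have "g m2 \<bullet> (P *v g m1) = g m1 \<bullet> (P *v g m2)" by (rule sym_dot[OF sP])
      ultimately have "(m2 - m1) * (g m1 \<bullet> (P *v g m2)) = 0" by (simp add: algebra_simps)
      then show ?thesis using that(3) by simp
    qed
    have inj: "inj_on g B"
    proof (rule inj_onI)
      fix m1 m2 assume a: "m1 \<in> B" "m2 \<in> B" "g m1 = g m2"
      show "m1 = m2"
      proof (rule ccontr)
        assume "m1 \<noteq> m2"
        then have "g m1 \<bullet> (P *v g m1) = 0" using orth[OF a(1,2)] a(3) by simp
        then show False using posP[of "g m1"] g[OF a(1)] by simp
      qed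
    qed
    have indep: "independent (g ` B)"
    proof
      assume "dependent (g ` B)"
      then obtain u v where uv: "v \<in> g ` B" "u v \<noteq> 0" "(\<Sum>x\<in>g ` B. u x *\<^sub>R x) = 0"
        using real_vector.dependent_finite[of "g ` B"] B(1) by blast
      obtain mu where mu: "mu \<in> B" "v = g mu" using uv(1) by blast
      have "0 = (P *v v) \<bullet> (\<Sum>x\<in>g ` B. u x *\<^sub>R x)" using uv(3) by simp
      also have "\<dots> = (\<Sum>x\<in>g ` B. u x * ((P *v v) \<bullet> x))" by (simp add: inner_sum_right)
      also have "\<dots> = u v * ((P *v v) \<bullet> v)"
      proof -
        have fB: "finite (g ` B)" using B(1) by simp
        have "(\<Sum>x\<in>g ` B - {v}. u x * ((P *v v) \<bullet> x)) = 0"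
        proof (rule sum.neutral, rule ballI)
          fix x assume x: "x \<in> g ` B - {v}"
          then obtain m' where m': "m' \<in> B" "x = g m'" by blast
          then have "m' \<noteq> mu" using x mu by auto
          then have "g m' \<bullet> (P *v g mu) = 0" using orth m' mu by blast
          then show "u x * ((P *v v) \<bullet> x) = 0" using m' mu by (simp add: inner_commute)
        qed
        then show ?thesis using sum.remove[OF fB uv(1), of "\<lambda>x. u x * ((P *v v) \<bullet> x)"] by simp
      qed
      finally have "u v * ((P *v v) \<bullet> v) = 0" by simp
      moreover have "(P *v v) \<bullet> v > 0" using posP[of v] g[OF mu(1)] mu(2) by (simp add: inner_commute)
      ultimately show False using uv(2) by simp
    qed
    have "card (g ` B) = CARD('p) + 1" using card_image[OF inj] B(2) by simp
    then show False using independent_bound[OF indep] by simp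
  qed
  have "Ch_max (M ** Q) = l" unfolding Ch_max_def E_def[symmetric]
    by (rule Max_eqI[OF fin ub lE])
  moreover have "w0 \<bullet> (M *v w0) = l * (w0 \<bullet> (P *v w0))" using w0(2) by simp
  ultimately show ?thesis using w0(1) bound unfolding P_def by blast
qed



lemma cs_forms:
  fixes G :: "'i \<Rightarrow> real^'p^'p"
  assumes fin: "finite S" and sG: "\<forall>i\<in>S. transpose (G i) = G i"
    and psd: "\<forall>i\<in>S. \<forall>z. 0 \<le> z \<bullet> (G i *v z)"
    and T: "(\<Sum>i\<in>S. y i \<bullet> (G i *v y i)) > 0"
  shows "(\<Sum>i\<in>S. a i \<bullet> (G i *v y i))^2 \<le> (\<Sum>i\<in>S. a i \<bullet> (G i *v a i)) * (\<Sum>i\<in>S. y i \<bullet> (G i *v y i))"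
proof -
  define P where "P = (\<Sum>i\<in>S. a i \<bullet> (G i *v a i))"
  define R where "R = (\<Sum>i\<in>S. a i \<bullet> (G i *v y i))"
  define Tt where "Tt = (\<Sum>i\<in>S. y i \<bullet> (G i *v y i))"
  have key: "0 \<le> P + 2 * t * R + t^2 * Tt" for t
  proof -
    have "0 \<le> (\<Sum>i\<in>S. (a i + t *\<^sub>R y i) \<bullet> (G i *v (a i + t *\<^sub>R y i)))"
      using psd by (intro sum_nonneg) auto
    also have "\<dots> = (\<Sum>i\<in>S. a i \<bullet> (G i *v a i) + 2 * t * (a i \<bullet> (G i *v y i)) + t^2 * (y i \<bullet> (G i *v y i)))"
    proof (rule sum.cong[OF refl])
      fix i assume i: "i \<in> S"
      have "y i \<bullet> (G i *v a i) = a i \<bullet> (G i *v y i)" using sym_dot sG i by metis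
      then show "(a i + t *\<^sub>R y i) \<bullet> (G i *v (a i + t *\<^sub>R y i)) = a i \<bullet> (G i *v a i) + 2 * t * (a i \<bullet> (G i *v y i)) + t^2 * (y i \<bullet> (G i *v y i))"
        using quad_form_add[of "G i" "a i" t "y i"] sG i by simp
    qed
    also have "\<dots> = P + 2 * t * R + t^2 * Tt"
      unfolding P_def R_def Tt_def by (simp add: sum.distrib sum_distrib_left)
    finally show ?thesis .
  qed
  have Tp: "Tt > 0" using T unfolding Tt_def .
  have "0 \<le> P + 2 * (- R / Tt) * R + (- R / Tt)^2 * Tt" by (rule key)
  also have "\<dots> = P - R^2 / Tt" using Tp by (simp add: field_simps power2_eq_square)
  finally have "R^2 / Tt \<le> P" by simp
  then have "R^2 \<le> P * Tt" using Tp by (simp add: divide_le_eq)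
  then show ?thesis unfolding P_def R_def Tt_def .
qed

lemma transpose_diff_mat:
  fixes A B :: "real^'p^'p"
  shows "transpose (A - B) = transpose A - transpose B"
  by (simp add: transpose_def vec_eq_iff)

lemma sym_left:
  fixes M :: "real^'p^'p"
  assumes "transpose M = M"
  shows "(M *v v) \<bullet> z = v \<bullet> (M *v z)"
  using sym_dot[OF assms, of v z] by (simp add: inner_commute)




lemma smv: fixes B :: "real^'p^'p" shows "(c *\<^sub>R B) *v z = c *\<^sub>R (B *v z)"
  by (simp add: scaleR_matrix_vector_assoc)

theorem lemma3:
  fixes k :: nat
    and V :: "nat \<Rightarrow> real^'p^'p"
    and Q :: "real^'p^'p"
    and d :: "nat \<Rightarrow> real"
    and x :: "nat \<Rightarrow> real^'p"
  assumes "k \<ge> 2"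
    and "\<forall>i\<in>{1..k}. pos_def_mat (V i)"
    and "pos_def_mat Q"
    and "\<exists>i\<in>{1..k}. \<exists>j\<in>{1..k}. x i \<noteq> x j"
  shows
    "let A = matrix_inv (\<Sum>i=1..k. matrix_inv (V i));
         \<nu> = A *v (\<Sum>i=1..k. matrix_inv (V i) *v x i);
         u = (\<Sum>i=1..k. d i *\<^sub>R (x i - \<nu>));
         B = (u \<bullet> (Q *v u)) / (\<Sum>j=1..k. (x j - \<nu>) \<bullet> (matrix_inv (V j) *v (x j - \<nu>)))
     in B \<le> Ch_max (((\<Sum>i=1..k. (d i)\<^sup>2 *\<^sub>R V i) - (\<Sum>i=1..k. d i)\<^sup>2 *\<^sub>R A) ** Q)"
proof -
  define S where "S = {1..k}"
  have finS: "finite S" and neS: "S \<noteq> {}" using assms(1) by (auto simp: S_def)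
  define Vi where "Vi i = matrix_inv (V i)" for i
  define S0 where "S0 = (\<Sum>i\<in>S. Vi i)"
  define A where "A = matrix_inv S0"
  define nu where "nu = A *v (\<Sum>i\<in>S. Vi i *v x i)"
  define y where "y i = x i - nu" for i
  define u where "u = (\<Sum>i\<in>S. d i *\<^sub>R y i)"
  define Sd where "Sd = (\<Sum>j\<in>S. y j \<bullet> (Vi j *v y j))"
  define D where "D = (\<Sum>i\<in>S. d i)"
  define M where "M = (\<Sum>i\<in>S. (d i)\<^sup>2 *\<^sub>R V i) - D\<^sup>2 *\<^sub>R A"
  have pV: "pos_def_mat (V i)" if "i \<in> S" for i using assms(2) that by (simp add: S_def)
  have sV: "transpose (V i) = V i" if "i \<in> S" for i using pV[OF that] by (simp add: pos_def_mat_def)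
  have pVi: "pos_def_mat (Vi i)" if "i \<in> S" for i unfolding Vi_def using pd_inv[OF pV[OF that]] .
  have sVi: "transpose (Vi i) = Vi i" if "i \<in> S" for i using pVi[OF that] by (simp add: pos_def_mat_def)
  have VVi: "V i *v (Vi i *v z) = z" if "i \<in> S" for i z
    using inv_props(1)[OF pd_invertible[OF pV[OF that]]] by (simp add: Vi_def matrix_vector_mul_assoc)
  have ViV: "Vi i *v (V i *v z) = z" if "i \<in> S" for i z
    using inv_props(2)[OF pd_invertible[OF pV[OF that]]] by (simp add: Vi_def matrix_vector_mul_assoc)
  have pS0: "pos_def_mat S0" unfolding S0_def using pd_sum[OF finS neS] pVi by auto
  have pA: "pos_def_mat A" unfolding A_def using pd_inv[OF pS0] .
  have sA: "transpose A = A" using pA by (simp add: pos_def_mat_def)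
  have S0A: "S0 *v (A *v z) = z" for z
    using inv_props(1)[OF pd_invertible[OF pS0]] by (simp add: A_def matrix_vector_mul_assoc)
  have psdVi: "\<forall>i\<in>S. \<forall>z. 0 \<le> z \<bullet> (Vi i *v z)"
  proof (intro ballI allI)
    fix i z assume i: "i \<in> S"
    show "0 \<le> z \<bullet> (Vi i *v z)"
      using pVi[OF i] unfolding pos_def_mat_def by (cases "z = 0") (auto intro: less_imp_le)
  qed
  have sumy: "(\<Sum>i\<in>S. Vi i *v y i) = 0"
  proof -
    have "(\<Sum>i\<in>S. Vi i *v y i) = (\<Sum>i\<in>S. Vi i *v x i) - (\<Sum>i\<in>S. Vi i *v nu)"
      unfolding y_def by (simp add: matrix_vector_mult_diff_distrib sum_subtractf)
    also have "(\<Sum>i\<in>S. Vi i *v nu) = S0 *v nu" unfolding S0_def by (simp add: sum_mv)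
    also have "\<dots> = (\<Sum>i\<in>S. Vi i *v x i)" unfolding nu_def by (rule S0A)
    finally show ?thesis by simp
  qed
  have Sdpos: "Sd > 0"
  proof -
    obtain i j where ij: "i \<in> S" "j \<in> S" "x i \<noteq> x j" using assms(4) unfolding S_def by blast
    then obtain m where m: "m \<in> S" "y m \<noteq> 0" unfolding y_def by (metis eq_iff_diff_eq_0)
    have "0 < y m \<bullet> (Vi m *v y m)" using pVi[OF m(1)] m(2) unfolding pos_def_mat_def by auto
    also have "\<dots> \<le> Sd" unfolding Sd_def
      by (rule member_le_sum[OF m(1) _ finS]) (use psdVi in auto)
    finally show ?thesis .
  qed
  define a where "a w i = d i *\<^sub>R (V i *v w) - D *\<^sub>R (A *v w)" for w i
  have e1: "w \<bullet> u = (\<Sum>i\<in>S. a w i \<bullet> (Vi i *v y i))" for w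
  proof -
    have "(\<Sum>i\<in>S. a w i \<bullet> (Vi i *v y i)) = (\<Sum>i\<in>S. d i * (w \<bullet> y i) - D * ((A *v w) \<bullet> (Vi i *v y i)))"
    proof (rule sum.cong[OF refl])
      fix i assume i: "i \<in> S"
      have "(V i *v w) \<bullet> (Vi i *v y i) = w \<bullet> y i"
        using sym_left[OF sV[OF i]] VVi[OF i] by metis
      then show "a w i \<bullet> (Vi i *v y i) = d i * (w \<bullet> y i) - D * ((A *v w) \<bullet> (Vi i *v y i))"
        unfolding a_def by (simp add: inner_diff_left)
    qed
    also have "\<dots> = (\<Sum>i\<in>S. d i * (w \<bullet> y i)) - D * ((A *v w) \<bullet> (\<Sum>i\<in>S. Vi i *v y i))"
      by (simp add: sum_subtractf sum_distrib_left inner_sum_right)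
    also have "\<dots> = w \<bullet> u" unfolding sumy u_def by (simp add: inner_sum_right)
    finally show ?thesis by simp
  qed
  have e2: "(\<Sum>i\<in>S. a w i \<bullet> (Vi i *v a w i)) = w \<bullet> (M *v w)" for w
  proof -
    define q where "q = A *v w"
    have "(\<Sum>i\<in>S. a w i \<bullet> (Vi i *v a w i)) =
          (\<Sum>i\<in>S. (d i)\<^sup>2 * (w \<bullet> (V i *v w)) - 2 * D * (d i * (q \<bullet> w)) + D\<^sup>2 * (q \<bullet> (Vi i *v q)))"
    proof (rule sum.cong[OF refl])
      fix i assume i: "i \<in> S"
      define p where "p = V i *v w"
      have 1: "p \<bullet> (Vi i *v p) = w \<bullet> (V i *v w)" unfolding p_def using VVi[OF i] ViV[OF i]
        by (metis inner_commute)
      have 2: "q \<bullet> (Vi i *v p) = q \<bullet> w" unfolding p_def using ViV[OF i] by simp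
      have 3: "p \<bullet> (Vi i *v q) = q \<bullet> w" using sym_dot[OF sVi[OF i], of p q] 2 by simp
      have "a w i \<bullet> (Vi i *v a w i) = (d i *\<^sub>R p - D *\<^sub>R q) \<bullet> (Vi i *v (d i *\<^sub>R p - D *\<^sub>R q))"
        unfolding a_def p_def q_def ..
      also have "\<dots> = (d i)\<^sup>2 * (p \<bullet> (Vi i *v p)) - D * d i * (q \<bullet> (Vi i *v p))
          - d i * D * (p \<bullet> (Vi i *v q)) + D\<^sup>2 * (q \<bullet> (Vi i *v q))"
        by (simp add: matrix_vector_mult_diff_distrib matrix_vector_mult_scaleR inner_diff_left
            inner_diff_right power2_eq_square algebra_simps)
      finally show "a w i \<bullet> (Vi i *v a w i) = (d i)\<^sup>2 * (w \<bullet> (V i *v w)) - 2 * D * (d i * (q \<bullet> w)) + D\<^sup>2 * (q \<bullet> (Vi i *v q))"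
        unfolding 1 2 3 by (simp add: algebra_simps)
    qed
    also have "\<dots> = (\<Sum>i\<in>S. (d i)\<^sup>2 * (w \<bullet> (V i *v w))) - 2 * D * (D * (q \<bullet> w)) + D\<^sup>2 * (q \<bullet> (S0 *v q))"
      unfolding D_def S0_def
      by (simp add: sum.distrib sum_subtractf sum_distrib_left sum_distrib_right sum_mv inner_sum_right)
    also have "q \<bullet> (S0 *v q) = q \<bullet> w" unfolding q_def S0A ..
    also have "q \<bullet> w = w \<bullet> (A *v w)" unfolding q_def by (simp add: inner_commute)
    also have "(\<Sum>i\<in>S. (d i)\<^sup>2 * (w \<bullet> (V i *v w))) - 2 * D * (D * (w \<bullet> (A *v w))) + D\<^sup>2 * (w \<bullet> (A *v w))
        = w \<bullet> (M *v w)"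
    proof -
      have "w \<bullet> (M *v w) = (\<Sum>i\<in>S. (d i)\<^sup>2 * (w \<bullet> (V i *v w))) - D\<^sup>2 * (w \<bullet> (A *v w))"
        unfolding M_def matrix_vector_mult_diff_rdistrib sum_mv inner_diff_right inner_sum_right smv
          inner_scaleR_right ..
      then show ?thesis by (simp add: power2_eq_square)
    qed
    finally show ?thesis .
  qed
  have sM: "transpose M = M"
    unfolding M_def transpose_diff_mat transpose_scalar transpose_sum
    using sV sA by (simp add: transpose_scalar)
  have Mpsd: "0 \<le> w \<bullet> (M *v w)" for w
    unfolding e2[symmetric] using psdVi by (intro sum_nonneg) auto
  obtain l where l: "Ch_max (M ** Q) = l" "\<forall>w. w \<bullet> (M *v w) \<le> l * (w \<bullet> (matrix_inv Q *v w))"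
    and w0: "\<exists>w0. w0 \<noteq> 0 \<and> w0 \<bullet> (M *v w0) = l * (w0 \<bullet> (matrix_inv Q *v w0))"
    using chmax[OF sM assms(3)] by blast
  have pQi: "pos_def_mat (matrix_inv Q)" using pd_inv[OF assms(3)] .
  have l0: "l \<ge> 0"
  proof -
    obtain w where w: "w \<noteq> 0" "w \<bullet> (M *v w) = l * (w \<bullet> (matrix_inv Q *v w))" using w0 by blast
    have "w \<bullet> (matrix_inv Q *v w) > 0" using pQi w(1) unfolding pos_def_mat_def by auto
    then show ?thesis using Mpsd[of w] w(2) by (simp add: zero_le_mult_iff)
  qed
  define qq where "qq = u \<bullet> (Q *v u)"
  have qq0: "qq \<ge> 0" using assms(3) unfolding qq_def pos_def_mat_def
    by (cases "u = 0") (auto intro: less_imp_le)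
  have main: "qq / Sd \<le> l"
  proof (cases "qq = 0")
    case True then show ?thesis using l0 by simp
  next
    case False
    then have qqp: "qq > 0" using qq0 by simp
    define w where "w = Q *v u"
    have wu: "w \<bullet> u = qq" unfolding w_def qq_def by (simp add: inner_commute)
    have wQw: "w \<bullet> (matrix_inv Q *v w) = qq"
      using inv_props(2)[OF pd_invertible[OF assms(3)]] unfolding w_def qq_def
      by (simp add: matrix_vector_mul_assoc inner_commute)
    have "qq^2 \<le> (w \<bullet> (M *v w)) * Sd"
      using cs_forms[OF finS, of Vi y "a w"] sVi psdVi Sdpos unfolding Sd_def e1[symmetric] e2 wu
      by auto
    also have "\<dots> \<le> l * qq * Sd" using l(2) wQw Sdpos by (metis mult_right_mono less_imp_le)
    finally have "qq * qq \<le> (l * Sd) * qq" by (simp add: power2_eq_square algebra_simps)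
    then have "qq \<le> l * Sd" using qqp by simp
    then show ?thesis using Sdpos by (simp add: divide_le_eq)
  qed
  show ?thesis
    using main l(1)
    unfolding Let_def qq_def Sd_def u_def M_def y_def nu_def A_def S0_def Vi_def D_def S_def
    by simp
qed


end
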